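(* Let $\mu$ be a positive finite Borel measure on $\overline{\mathbb D}$ and $f\in\mathcal D_\mu$, $f(z)=\sum_{k=0}^\infty a_kz^k$. Let $\sigma_n(f)(z):=\sum_{k=0}^n\bigl(1-\frac{k}{n+1}\bigr)a_kz^k$. Then $\|\sigma_n(f)-f\|_{\mathcal D_\mu}\to0$ as $n\to\infty$.
   Context: $\mathbb D$ is the open unit disk, $\mathrm{Hol}(\mathbb D)$ the holomorphic functions on $\mathbb D$, and $H^2$ the Hardy space with $\|\sum b_kz^k\|_{H^2}^2=\sum|b_k|^2$. For $\zeta\in\overline{\mathbb D}$, $\mathcal D_\zeta$ is the set of $f\in\mathrm{Hol}(\mathbb D)$ of the form $f(z)=a+(z-\zeta)g(z)$ with $g\in H^2$, $a\in\mathbb C$; for such $f$ set $\mathcal D_\zeta(f):=\|g\|_{H^2}^2$, and set $\mathcal D_\zeta(f):=\infty$ if $f\notin\mathcal D_\zeta$. For a positive finite Borel measure $\mu$ on $\overline{\mathbb D}$, $\mathcal D_\mu(f):=\int_{\overline{\mathbb D}}\mathcal D_\zeta(f)\,d\mu(\zeta)$, $\mathcal D_\mu$ is the set of $f\in\mathrm{Hol}(\mathbb D)$ with $\mathcal D_\mu(f)<\infty$, normed by $\|f\|_{\mathcal D_\mu}^2:=|f(0)|^2+\mathcal D_\mu(f)$. *)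

theory Defs
  imports "HOL-Complex_Analysis.Complex_Analysis"
begin

definition taylor_coeff :: "(complex \<Rightarrow> complex) \<Rightarrow> nat \<Rightarrow> complex" where
  "taylor_coeff f k = (deriv ^^ k) f 0 / of_nat (fact k)"

definition hardy_norm2 :: "(complex \<Rightarrow> complex) \<Rightarrow> ennreal" where
  "hardy_norm2 g = (\<Sum>k. ennreal ((cmod (taylor_coeff g k))\<^sup>2))"

definition H2 :: "(complex \<Rightarrow> complex) set" where
  "H2 = {g. g holomorphic_on ball 0 1 \<and> hardy_norm2 g < \<infinity>}"

text \<open>Local Dirichlet integral D_zeta(f); the representation f = a + (z - zeta) g with g in H^2
  is unique, so the infimum is the value ||g||^2, and it is \<infinity> (Inf of the empty set) if
  no representation exists.\<close>
definition local_dirichlet :: "complex \<Rightarrow> (complex \<Rightarrow> complex) \<Rightarrow> ennreal" where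
  "local_dirichlet \<zeta> f =
     (INF g \<in> {g \<in> H2. \<exists>a. \<forall>z\<in>ball 0 1. f z = a + (z - \<zeta>) * g z}. hardy_norm2 g)"

definition dirichlet_mu :: "complex measure \<Rightarrow> (complex \<Rightarrow> complex) \<Rightarrow> ennreal" where
  "dirichlet_mu \<mu> f = (\<integral>\<^sup>+ \<zeta>. local_dirichlet \<zeta> f \<partial>\<mu>)"

definition Dmu_norm2 :: "complex measure \<Rightarrow> (complex \<Rightarrow> complex) \<Rightarrow> ennreal" where
  "Dmu_norm2 \<mu> f = ennreal ((cmod (f 0))\<^sup>2) + dirichlet_mu \<mu> f"

definition fejer_mean :: "nat \<Rightarrow> (complex \<Rightarrow> complex) \<Rightarrow> complex \<Rightarrow> complex" where
  "fejer_mean n f z = (\<Sum>k\<le>n. (1 - of_nat k / of_nat (n + 1)) * taylor_coeff f k * z ^ k)"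

end

theory Submission
  imports Defs
begin


lemma lower_nn_integral_cmult_le:
  fixes c :: ennreal
  assumes "c \<noteq> top"
  shows "(\<integral>\<^sup>+x. c * f x \<partial>M) \<le> c * (\<integral>\<^sup>+x. f x \<partial>M)"
proof (cases "c = 0")
  case True then show ?thesis by simp
next
  case False
  show ?thesis
    unfolding nn_integral_def
  proof (rule SUP_least)
    fix g assume "g \<in> {g. simple_function M g \<and> g \<le> (\<lambda>x. c * f x)}"
    then have g: "simple_function M g" "\<And>x. g x \<le> c * f x" by (auto simp: le_fun_def)
    define h where "h = (\<lambda>x. g x / c)"
    have hs: "simple_function M h" unfolding h_def by (rule simple_function_compose1[OF g(1)])
    have hle: "h \<le> f"
      unfolding le_fun_def h_def
    proof
      fix x show "g x / c \<le> f x"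
        using g(2)[of x] False assms
        by (metis ennreal_divide_times divide_right_mono_ennreal mult.commute ennreal_mult_divide_eq)
    qed
    have "integral\<^sup>S M g = integral\<^sup>S M (\<lambda>x. c * h x)"
      unfolding h_def using False assms by (simp add: ennreal_times_divide mult.commute[of c] ennreal_mult_divide_eq)
    also have "\<dots> = c * integral\<^sup>S M h" using hs by simp
    also have "\<dots> \<le> c * (SUP g \<in> {g. simple_function M g \<and> g \<le> f}. integral\<^sup>S M g)"
      using hs hle by (intro mult_left_mono SUP_upper) auto
    finally show "integral\<^sup>S M g \<le> c * (SUP g \<in> {g. simple_function M g \<and> g \<le> f}. integral\<^sup>S M g)" .
  qed
qed

lemma lower_dct:
  fixes \<phi> :: "'a \<Rightarrow> ennreal" and \<psi> :: "nat \<Rightarrow> 'a \<Rightarrow> ennreal"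
  assumes fin: "(\<integral>\<^sup>+x. \<phi> x \<partial>M) < \<infinity>"
    and le: "\<And>n x. x \<in> space M \<Longrightarrow> \<psi> n x \<le> \<phi> x"
    and lim: "\<And>x. x \<in> space M \<Longrightarrow> \<phi> x < \<infinity> \<Longrightarrow> (\<lambda>n. \<psi> n x) \<longlonglongrightarrow> 0"
  shows "(\<lambda>n. \<integral>\<^sup>+x. \<psi> n x \<partial>M) \<longlonglongrightarrow> 0"
proof -
  have finn: "(\<integral>\<^sup>+x. \<psi> n x \<partial>M) \<noteq> \<infinity>" for n
  proof -
    have "(\<integral>\<^sup>+x. \<psi> n x \<partial>M) \<le> (\<integral>\<^sup>+x. \<phi> x \<partial>M)" using le by (intro nn_integral_mono) auto
    then show ?thesis using fin by auto
  qed
  have "\<forall>n. \<exists>s. simple_function M s \<and> s \<le> \<psi> n \<and>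
          (\<integral>\<^sup>+x. \<psi> n x \<partial>M) < integral\<^sup>S M s + ennreal (1 / (Suc n))" 
  proof
    fix n
    have "\<exists>s \<in> {g. simple_function M g \<and> g \<le> \<psi> n}.
           (\<integral>\<^sup>+x. \<psi> n x \<partial>M) < integral\<^sup>S M s + ennreal (1 / (Suc n))"
      by (rule SUP_approx_ennreal[OF _ _ _ finn[of n]])
         (auto simp: nn_integral_def intro!: exI[of _ "\<lambda>x. 0"] simp: le_fun_def)
    then show "\<exists>s. simple_function M s \<and> s \<le> \<psi> n \<and>
          (\<integral>\<^sup>+x. \<psi> n x \<partial>M) < integral\<^sup>S M s + ennreal (1 / (Suc n))" by auto
  qed
  then obtain s where s: "\<And>n. simple_function M (s n)" "\<And>n. s n \<le> \<psi> n"
     "\<And>n. (\<integral>\<^sup>+x. \<psi> n x \<partial>M) < integral\<^sup>S M (s n) + ennreal (1 / (Suc n))"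
    by metis
  have smeas[measurable]: "s n \<in> borel_measurable M" for n
    using s(1) by (rule borel_measurable_simple_function)
  have sint: "integral\<^sup>S M (s n) = (\<integral>\<^sup>+x. s n x \<partial>M)" for n
    using s(1) by (simp add: nn_integral_eq_simple_integral)
  define W where "W = (\<lambda>x. SUP n. s n x)"
  have Wm[measurable]: "W \<in> borel_measurable M" unfolding W_def by measurable
  have Wle: "W x \<le> \<phi> x" if "x \<in> space M" for x
    unfolding W_def using s(2) le[OF that] by (intro SUP_least) (auto simp: le_fun_def intro: order_trans)
  have Wfin: "(\<integral>\<^sup>+x. W x \<partial>M) < \<infinity>"
    using Wle fin by (meson nn_integral_mono order.strict_trans1)
  have ls: "limsup (\<lambda>n. \<integral>\<^sup>+x. s n x \<partial>M) \<le> (\<integral>\<^sup>+ x. limsup (\<lambda>n. s n x) \<partial>M)"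
    by (rule nn_integral_limsup[OF smeas Wm _ Wfin]) (auto simp: W_def intro!: AE_I2 SUP_upper)
  define L where "L = (\<lambda>x. limsup (\<lambda>n. s n x))"
  have Lm[measurable]: "L \<in> borel_measurable M" unfolding L_def by measurable
  have L0: "L x = 0" if "x \<in> space M" "\<phi> x < \<infinity>" for x
  proof -
    have "L x \<le> limsup (\<lambda>n. \<psi> n x)" unfolding L_def
      using s(2) by (intro Limsup_mono) (auto simp: le_fun_def)
    also have "\<dots> = 0" using lim[OF that] by (simp add: lim_imp_Limsup)
    finally show ?thesis by simp
  qed
  define A where "A = {x \<in> space M. L x \<noteq> 0}"
  have Am: "A \<in> sets M" unfolding A_def by measurable
  have "(\<integral>\<^sup>+x. top * indicator A x \<partial>M) \<le> (\<integral>\<^sup>+x. \<phi> x \<partial>M)"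
  proof (rule nn_integral_mono)
    fix x assume x: "x \<in> space M"
    show "top * indicator A x \<le> \<phi> x"
    proof (cases "x \<in> A")
      case True
      then have "\<not> \<phi> x < \<infinity>" using L0 x unfolding A_def by auto
      then have "\<phi> x = top" by (metis less_top infinity_ennreal_def)
      then show ?thesis by simp
    qed simp
  qed
  then have "top * emeasure M A < \<infinity>" using fin Am by (simp add: nn_integral_cmult_indicator)
  then have A0: "emeasure M A = 0" by (auto simp: ennreal_mult_less_top)
  have "AE x in M. L x = 0"
    by (rule AE_I[OF _ A0 Am]) (auto simp: A_def)
  then have "(\<integral>\<^sup>+ x. L x \<partial>M) = 0" by (simp add: nn_integral_cong_AE)
  with ls have "limsup (\<lambda>n. \<integral>\<^sup>+x. s n x \<partial>M) \<le> 0" unfolding L_def by simp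
  then have slim: "(\<lambda>n. \<integral>\<^sup>+x. s n x \<partial>M) \<longlonglongrightarrow> 0"
    by (metis Liminf_le_Limsup bot.extremum_unique tendsto_iff_Liminf_eq_Limsup trivial_limit_sequentially zero_ennreal_def le_zero_eq)
  have e: "(\<lambda>n. ennreal (1 / Suc n)) \<longlonglongrightarrow> 0"
    using LIMSEQ_inverse_real_of_nat by (auto intro!: tendsto_ennrealI[where x=0, simplified] simp: inverse_eq_divide)
  have "(\<lambda>n. (\<integral>\<^sup>+x. s n x \<partial>M) + ennreal (1 / Suc n)) \<longlonglongrightarrow> 0 + 0"
    by (intro tendsto_add slim e)
  then have h: "(\<lambda>n. (\<integral>\<^sup>+x. s n x \<partial>M) + ennreal (1 / Suc n)) \<longlonglongrightarrow> 0" by simp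
  show ?thesis
  proof (rule tendsto_sandwich[OF _ _ tendsto_const h])
    show "\<forall>\<^sub>F n in sequentially. 0 \<le> (\<integral>\<^sup>+x. \<psi> n x \<partial>M)" by simp
    show "\<forall>\<^sub>F n in sequentially. (\<integral>\<^sup>+x. \<psi> n x \<partial>M) \<le> (\<integral>\<^sup>+x. s n x \<partial>M) + ennreal (1 / Suc n)"
      using s(3) sint by (auto intro!: always_eventually less_imp_le)
  qed
qed



lemma hd_lin: "(deriv ^^ i) (\<lambda>w. w - \<zeta>) z = (if i = 0 then z - \<zeta> else if i = 1 then 1 else (0::complex))"
proof -
  have "(deriv ^^ i) (\<lambda>w. w - \<zeta>) z = (deriv ^^ i) (\<lambda>w. w) z - (deriv ^^ i) (\<lambda>w. \<zeta>) z"
    by (rule higher_deriv_diff[where S=UNIV]) auto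
  then show ?thesis by simp
qed

lemma hd_pow0: "(deriv ^^ k) (\<lambda>w. w ^ j) (0::complex) = (if j = k then fact k else 0)"
proof -
  have "(deriv ^^ k) (\<lambda>w. (w - 0) ^ j) (0::complex) = pochhammer (of_nat (Suc j - k)) k * (0 - 0) ^ (j - k)"
    by (rule higher_deriv_power)
  then have e: "(deriv ^^ k) (\<lambda>w. w ^ j) (0::complex) = pochhammer (of_nat (Suc j - k)) k * 0 ^ (j - k)"
    by simp
  show ?thesis
  proof (cases "j = k")
    case True then show ?thesis using e by (simp add: pochhammer_fact)
  next
    case False
    show ?thesis
    proof (cases "j < k")
      case True
      then have "Suc j - k = 0" by simp
      then show ?thesis using e True False by (simp add: pochhammer_0_left)
    next
      case False2: False
      then show ?thesis using e False by simp
    qed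
  qed
qed

lemma hd_poly:
  "(deriv ^^ k) (\<lambda>z. \<Sum>j\<le>N. c j * z ^ j) (0::complex) = (if k \<le> N then c k * fact k else 0)"
proof (induction N)
  case 0
  have "(deriv ^^ k) (\<lambda>z. c 0 * z ^ 0) (0::complex) = c 0 * (deriv ^^ k) (\<lambda>z. z ^ 0) 0"
    by (rule higher_deriv_cmult[where A=UNIV]) auto
  then show ?case using hd_pow0[of k 0] by auto
next
  case (Suc N)
  have "(deriv ^^ k) (\<lambda>z. (\<Sum>j\<le>N. c j * z ^ j) + c (Suc N) * z ^ Suc N) (0::complex)
     = (deriv ^^ k) (\<lambda>z. \<Sum>j\<le>N. c j * z ^ j) 0 + (deriv ^^ k) (\<lambda>z. c (Suc N) * z ^ Suc N) 0"
    by (rule higher_deriv_add[where S=UNIV]) (auto intro!: holomorphic_intros)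
  moreover have "(deriv ^^ k) (\<lambda>z. c (Suc N) * z ^ Suc N) (0::complex) = c (Suc N) * (deriv ^^ k) (\<lambda>z. z ^ Suc N) 0"
    by (rule higher_deriv_cmult[where A=UNIV]) (auto intro!: holomorphic_intros)
  ultimately show ?case using Suc hd_pow0[of k "Suc N"] by (auto simp: le_Suc_eq)
qed

lemma taylor_poly: "taylor_coeff (\<lambda>z. \<Sum>j\<le>N. c j * z ^ j) k = (if k \<le> N then c k else 0)"
  unfolding taylor_coeff_def hd_poly by simp

lemma coeff_relation:
  assumes f: "f holomorphic_on ball 0 1" and g: "g holomorphic_on ball 0 1"
    and eq: "\<forall>z\<in>ball 0 1. f z = a + (z - \<zeta>) * g z"
  shows "taylor_coeff f k = (if k = 0 then a else taylor_coeff g (k - 1)) - \<zeta> * taylor_coeff g k"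
proof -
  have hg: "(\<lambda>z. a + (z - \<zeta>) * g z) holomorphic_on ball 0 1" using g by (auto intro!: holomorphic_intros)
  have "(deriv ^^ k) f 0 = (deriv ^^ k) (\<lambda>z. a + (z - \<zeta>) * g z) 0"
    by (rule higher_deriv_transform_within_open[OF f hg]) (use eq in auto)
  also have "\<dots> = (deriv ^^ k) (\<lambda>z. a) 0 + (deriv ^^ k) (\<lambda>z. (z - \<zeta>) * g z) 0"
    by (rule higher_deriv_add[where S="ball 0 1"]) (use g in \<open>auto intro!: holomorphic_intros\<close>)
  also have "(deriv ^^ k) (\<lambda>z. (z - \<zeta>) * g z) 0 =
       (\<Sum>i = 0..k. of_nat (k choose i) * (deriv ^^ i) (\<lambda>z. z - \<zeta>) 0 * (deriv ^^ (k-i)) g 0)"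
    by (rule higher_deriv_mult[where S="ball 0 1"]) (use g in \<open>auto intro!: holomorphic_intros\<close>)
  also have "\<dots> = (\<Sum>i = 0..k. (if i = 0 then - \<zeta> * (deriv ^^ k) g 0 else 0)
                 + (if i = 1 then of_nat k * (deriv ^^ (k - 1)) g 0 else 0))"
    by (intro sum.cong refl) (auto simp: hd_lin)
  also have "\<dots> = - \<zeta> * (deriv ^^ k) g 0 + (if 1 \<le> k then of_nat k * (deriv ^^ (k - 1)) g 0 else 0)"
    by (simp add: sum.distrib)
  finally have D: "(deriv ^^ k) f 0 = (if k = 0 then a else 0) - \<zeta> * (deriv ^^ k) g 0
      + (if 1 \<le> k then of_nat k * (deriv ^^ (k - 1)) g 0 else 0)" by simp
  show ?thesis
  proof (cases k)
    case 0 then show ?thesis using D by (simp add: taylor_coeff_def)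
  next
    case (Suc m)
    have E: "(deriv ^^ k) f 0 = - \<zeta> * (deriv ^^ k) g 0 + of_nat (Suc m) * (deriv ^^ m) g 0"
      using D Suc by simp
    have nz: "(of_nat (fact m) :: complex) \<noteq> 0" "(of_nat (Suc m) :: complex) \<noteq> 0" by (simp, rule of_nat_neq_0)
    have F: "(of_nat (fact k) :: complex) = of_nat (Suc m) * of_nat (fact m)" using Suc by (simp only: fact_Suc of_nat_mult of_nat_id)
    have "taylor_coeff f k = (- \<zeta> * (deriv ^^ k) g 0 + of_nat (Suc m) * (deriv ^^ m) g 0) / (of_nat (Suc m) * of_nat (fact m))"
      unfolding taylor_coeff_def E F ..
    also have "\<dots> = - \<zeta> * ((deriv ^^ k) g 0 / (of_nat (Suc m) * of_nat (fact m))) + (deriv ^^ m) g 0 / of_nat (fact m)"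
      using nz by (simp add: field_simps del: of_nat_Suc)
    also have "\<dots> = - \<zeta> * taylor_coeff g k + taylor_coeff g (k - 1)"
      unfolding taylor_coeff_def F using Suc by simp
    finally show ?thesis using Suc by simp
  qed
qed



definition Sd :: "(nat \<Rightarrow> complex) \<Rightarrow> complex \<Rightarrow> nat \<Rightarrow> nat \<Rightarrow> complex" where
  "Sd b \<zeta> n j = (\<Sum>i\<in>{j..n}. b i * \<zeta> ^ (i - j))"

definition pcf :: "(nat \<Rightarrow> complex) \<Rightarrow> complex \<Rightarrow> nat \<Rightarrow> nat \<Rightarrow> complex" where
  "pcf b \<zeta> n j = (1 - of_nat j / of_nat (n + 1)) * b j - Sd b \<zeta> n j / of_nat (n + 1)"

lemma Sd_rec:
  assumes "1 \<le> k" "k \<le> n"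
  shows "Sd b \<zeta> n (k - 1) = b (k - 1) + \<zeta> * Sd b \<zeta> n k"
proof -
  have "{k - 1..n} = insert (k - 1) {k..n}" using assms by auto
  then have "Sd b \<zeta> n (k - 1) = b (k - 1) + (\<Sum>i\<in>{k..n}. b i * \<zeta> ^ (i - (k - 1)))"
    unfolding Sd_def using assms by (simp add: sum.insert)
  also have "(\<Sum>i\<in>{k..n}. b i * \<zeta> ^ (i - (k - 1))) = \<zeta> * Sd b \<zeta> n k"
    unfolding Sd_def sum_distrib_left
  proof (intro sum.cong refl)
    fix i assume "i \<in> {k..n}"
    then have "i - (k - 1) = Suc (i - k)" using assms by auto
    then show "b i * \<zeta> ^ (i - (k - 1)) = \<zeta> * (b i * \<zeta> ^ (i - k))" by simp
  qed
  finally show ?thesis .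
qed

lemma pcf_n: "pcf b \<zeta> n n = 0"
proof -
  have "Sd b \<zeta> n n = b n" unfolding Sd_def by simp
  moreover have "(of_nat (n + 1) :: complex) \<noteq> 0" by (simp del: of_nat_Suc add: of_nat_neq_0)
  ultimately show ?thesis unfolding pcf_def by (simp add: field_simps)
qed

lemma pcf_step:
  assumes "1 \<le> k" "k \<le> n"
  shows "pcf b \<zeta> n (k - 1) - \<zeta> * pcf b \<zeta> n k = (1 - of_nat k / of_nat (n + 1)) * (b (k - 1) - \<zeta> * b k)"
proof -
  have nz: "(of_nat (n + 1) :: complex) \<noteq> 0" by (simp del: of_nat_Suc add: of_nat_neq_0)
  have k: "(of_nat (k - 1) :: complex) = of_nat k - 1" using assms by (simp add: of_nat_diff)
  have gen: "\<And>N K B1 B2 S. N \<noteq> (0::complex) \<Longrightarrow>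
     ((1 - (K - 1) / N) * B1 - (B1 + \<zeta> * S) / N) - \<zeta> * ((1 - K / N) * B2 - S / N) = (1 - K / N) * (B1 - \<zeta> * B2)"
    by (simp add: field_simps)
  show ?thesis unfolding pcf_def Sd_rec[OF assms] k by (rule gen[OF nz])
qed

lemma shift_mult:
  "((z::complex) - \<zeta>) * (\<Sum>j<Suc N. q j * z ^ j) =
     (\<Sum>k<Suc N. ((if k = 0 then 0 else q (k - 1)) - \<zeta> * q k) * z ^ k) + q N * z ^ Suc N"
proof (induction N)
  case 0 then show ?case by (simp add: algebra_simps)
next
  case (Suc N)
  have "(z - \<zeta>) * (\<Sum>j<Suc (Suc N). q j * z ^ j) = (z - \<zeta>) * (\<Sum>j<Suc N. q j * z ^ j) + (z - \<zeta>) * (q (Suc N) * z ^ Suc N)"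
    by (simp add: algebra_simps)
  also have "\<dots> = (\<Sum>k<Suc N. ((if k = 0 then 0 else q (k - 1)) - \<zeta> * q k) * z ^ k) + q N * z ^ Suc N
                  + (z - \<zeta>) * (q (Suc N) * z ^ Suc N)" using Suc by simp
  finally show ?case by (simp add: algebra_simps)
qed

lemma poly_identity:
  assumes A: "\<And>k. A k = (if k = 0 then a else b (k - 1)) - \<zeta> * b k"
  shows "(\<Sum>k\<le>n. (1 - of_nat k / of_nat (n + 1)) * A k * z ^ k) =
         (A 0 + \<zeta> * pcf b \<zeta> n 0) + (z - \<zeta>) * (\<Sum>j\<le>n. pcf b \<zeta> n j * z ^ j)"
proof -
  have "(z - \<zeta>) * (\<Sum>j\<le>n. pcf b \<zeta> n j * z ^ j) =
     (\<Sum>k\<le>n. ((if k = 0 then 0 else pcf b \<zeta> n (k - 1)) - \<zeta> * pcf b \<zeta> n k) * z ^ k)"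
    using shift_mult[of z \<zeta> "pcf b \<zeta> n" n] by (simp add: pcf_n lessThan_Suc_atMost)
  moreover have "(\<Sum>k\<le>n. (1 - of_nat k / of_nat (n + 1)) * A k * z ^ k) =
     (\<Sum>k\<le>n. ((if k = 0 then 0 else pcf b \<zeta> n (k - 1)) - \<zeta> * pcf b \<zeta> n k) * z ^ k
              + (if k = 0 then A 0 + \<zeta> * pcf b \<zeta> n 0 else 0))"
  proof (intro sum.cong refl)
    fix k assume k: "k \<in> {..n}"
    show "(1 - of_nat k / of_nat (n + 1)) * A k * z ^ k =
       ((if k = 0 then 0 else pcf b \<zeta> n (k - 1)) - \<zeta> * pcf b \<zeta> n k) * z ^ k
              + (if k = 0 then A 0 + \<zeta> * pcf b \<zeta> n 0 else 0)"
    proof (cases "k = 0")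
      case True then show ?thesis by simp
    next
      case False
      then show ?thesis using pcf_step[of k n b \<zeta>] k A[of k] by auto
    qed
  qed
  ultimately show ?thesis by (simp add: sum.distrib)
qed



definition cw :: "nat \<Rightarrow> nat \<Rightarrow> real" where
  "cw n j = (if j \<le> n then 2 * (real j / real (n + 1))\<^sup>2 + 2 * (real j + 1) / real (n + 1) else 1)"

lemma Sd_bound:
  assumes "cmod \<zeta> \<le> 1"
  shows "(cmod (Sd b \<zeta> n j))\<^sup>2 \<le> real (n + 1) * (\<Sum>i\<in>{j..n}. (cmod (b i))\<^sup>2)"
proof -
  have "cmod (Sd b \<zeta> n j) \<le> (\<Sum>i\<in>{j..n}. cmod (b i * \<zeta> ^ (i - j)))"
    unfolding Sd_def by (rule norm_sum)
  also have "\<dots> \<le> (\<Sum>i\<in>{j..n}. cmod (b i))"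
  proof (intro sum_mono)
    fix i
    have "cmod (\<zeta> ^ (i - j)) \<le> 1" using assms by (simp add: norm_power power_le_one)
    then show "cmod (b i * \<zeta> ^ (i - j)) \<le> cmod (b i)"
      by (simp add: norm_mult mult_left_le)
  qed
  finally have 1: "cmod (Sd b \<zeta> n j) \<le> (\<Sum>i\<in>{j..n}. cmod (b i))" .
  have "(cmod (Sd b \<zeta> n j))\<^sup>2 \<le> (\<Sum>i\<in>{j..n}. cmod (b i))\<^sup>2"
    using 1 by (intro power_mono) auto
  also have "\<dots> \<le> (\<Sum>i\<in>{j..n}. (cmod (b i))\<^sup>2) * card {j..n}"
    by (rule sum_squared_le_sum_of_squares)
  also have "\<dots> \<le> (\<Sum>i\<in>{j..n}. (cmod (b i))\<^sup>2) * real (n + 1)"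
    by (intro mult_left_mono) (auto intro: sum_nonneg)
  finally show ?thesis by (simp add: mult.commute)
qed

lemma double_sum:
  fixes x :: "nat \<Rightarrow> real"
  shows "(\<Sum>j\<le>n. \<Sum>i\<in>{j..n}. x i) = (\<Sum>i\<le>n. real (i + 1) * x i)"
proof (induction n)
  case 0 then show ?case by simp
next
  case (Suc n)
  have "(\<Sum>j\<le>Suc n. \<Sum>i\<in>{j..Suc n}. x i) = (\<Sum>j\<le>n. \<Sum>i\<in>{j..Suc n}. x i) + x (Suc n)"
    by simp
  also have "(\<Sum>j\<le>n. \<Sum>i\<in>{j..Suc n}. x i) = (\<Sum>j\<le>n. (\<Sum>i\<in>{j..n}. x i) + x (Suc n))"
  proof (intro sum.cong refl)
    fix j assume "j \<in> {..n}"
    then have "{j..Suc n} = insert (Suc n) {j..n}" by auto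
    then show "(\<Sum>i\<in>{j..Suc n}. x i) = (\<Sum>i\<in>{j..n}. x i) + x (Suc n)" by simp
  qed
  also have "\<dots> = (\<Sum>i\<le>n. real (i + 1) * x i) + real (n + 1) * x (Suc n)"
    using Suc by (simp add: sum.distrib)
  finally show ?case by (simp add: algebra_simps)
qed

lemma coeff_bound:
  "(cmod (pcf b \<zeta> n j - b j))\<^sup>2 \<le> 2 * (real j / real (n + 1))\<^sup>2 * (cmod (b j))\<^sup>2 + 2 * (cmod (Sd b \<zeta> n j))\<^sup>2 / (real (n + 1))\<^sup>2"
proof -
  have nz: "(of_nat (n + 1) :: complex) \<noteq> 0" by (simp del: of_nat_Suc add: of_nat_neq_0)
  have e: "pcf b \<zeta> n j - b j = - ((of_nat j / of_nat (n + 1)) * b j) + (- (Sd b \<zeta> n j / of_nat (n + 1)))"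
    unfolding pcf_def by (simp add: algebra_simps)
  define u where "u = cmod ((of_nat j / of_nat (n + 1)) * b j)"
  define v where "v = cmod (Sd b \<zeta> n j / of_nat (n + 1))"
  have "cmod (pcf b \<zeta> n j - b j) \<le> u + v" unfolding e u_def v_def
    by (metis norm_minus_cancel norm_triangle_ineq)
  then have "(cmod (pcf b \<zeta> n j - b j))\<^sup>2 \<le> (u + v)\<^sup>2" by (intro power_mono) auto
  also have "\<dots> \<le> 2 * u\<^sup>2 + 2 * v\<^sup>2" using power2_diff[of u v] power2_sum[of u v] zero_le_power2[of "u - v"] by linarith
  also have "u = real j / real (n + 1) * cmod (b j)" unfolding u_def
    by (simp add: norm_mult norm_divide del: of_nat_Suc)
  also have "v = cmod (Sd b \<zeta> n j) / real (n + 1)" unfolding v_def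
    by (simp add: norm_divide del: of_nat_Suc)
  finally show ?thesis by (simp add: power_mult_distrib power_divide)
qed

lemma finite_S:
  assumes "cmod \<zeta> \<le> 1"
  shows "(\<Sum>j\<le>n. 2 * (cmod (Sd b \<zeta> n j))\<^sup>2 / (real (n + 1))\<^sup>2) \<le> (\<Sum>j\<le>n. 2 * (real j + 1) / real (n + 1) * (cmod (b j))\<^sup>2)"
proof -
  have "(\<Sum>j\<le>n. 2 * (cmod (Sd b \<zeta> n j))\<^sup>2 / (real (n + 1))\<^sup>2) \<le>
        (\<Sum>j\<le>n. 2 * (real (n + 1) * (\<Sum>i\<in>{j..n}. (cmod (b i))\<^sup>2)) / (real (n + 1))\<^sup>2)"
    using Sd_bound[OF assms] by (intro sum_mono divide_right_mono mult_left_mono) auto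
  also have "\<dots> = (\<Sum>j\<le>n. 2 / real (n + 1) * (\<Sum>i\<in>{j..n}. (cmod (b i))\<^sup>2))"
  proof (intro sum.cong refl)
    fix j
    have g: "\<And>r X. r > 0 \<Longrightarrow> 2 * (r * X) / r\<^sup>2 = 2 / r * (X::real)"
      by (simp add: power2_eq_square field_simps)
    show "2 * (real (n + 1) * (\<Sum>i\<in>{j..n}. (cmod (b i))\<^sup>2)) / (real (n + 1))\<^sup>2 = 2 / real (n + 1) * (\<Sum>i\<in>{j..n}. (cmod (b i))\<^sup>2)"
      by (rule g) simp
  qed
  also have "\<dots> = 2 / real (n + 1) * (\<Sum>j\<le>n. \<Sum>i\<in>{j..n}. (cmod (b i))\<^sup>2)"
    by (simp only: sum_distrib_left)
  also have "\<dots> = 2 / real (n + 1) * (\<Sum>i\<le>n. real (i + 1) * (cmod (b i))\<^sup>2)"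
    by (simp only: double_sum)
  also have "\<dots> = (\<Sum>j\<le>n. 2 * (real j + 1) / real (n + 1) * (cmod (b j))\<^sup>2)"
    unfolding sum_distrib_left by (intro sum.cong refl) (simp add: field_simps)
  finally show ?thesis .
qed



lemma hardy_bound:
  assumes z: "cmod \<zeta> \<le> 1"
  shows "(\<Sum>j. ennreal ((cmod ((if j \<le> n then pcf b \<zeta> n j else 0) - b j))\<^sup>2))
         \<le> (\<Sum>j. ennreal (cw n j * (cmod (b j))\<^sup>2))"
proof -
  define A where "A j = (if j \<le> n then 2 * (real j / real (n + 1))\<^sup>2 * (cmod (b j))\<^sup>2 else (cmod (b j))\<^sup>2)" for j
  define B where "B j = (if j \<le> n then 2 * (cmod (Sd b \<zeta> n j))\<^sup>2 / (real (n + 1))\<^sup>2 else 0)" for j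
  define B' where "B' j = (if j \<le> n then 2 * (real j + 1) / real (n + 1) * (cmod (b j))\<^sup>2 else 0)" for j
  have A0: "0 \<le> A j" for j unfolding A_def by auto
  have B0: "0 \<le> B j" for j unfolding B_def by auto
  have B'0: "0 \<le> B' j" for j unfolding B'_def by auto
  have "(\<Sum>j. ennreal ((cmod ((if j \<le> n then pcf b \<zeta> n j else 0) - b j))\<^sup>2)) \<le> (\<Sum>j. ennreal (A j) + ennreal (B j))"
  proof (intro suminf_le summableI)
    fix j
    have "(cmod ((if j \<le> n then pcf b \<zeta> n j else 0) - b j))\<^sup>2 \<le> A j + B j"
      using coeff_bound[of b \<zeta> n j] unfolding A_def B_def by auto
    then show "ennreal ((cmod ((if j \<le> n then pcf b \<zeta> n j else 0) - b j))\<^sup>2) \<le> ennreal (A j) + ennreal (B j)"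
      using A0 B0 by (simp add: ennreal_plus[symmetric] ennreal_leI del: ennreal_plus)
  qed
  also have "\<dots> = (\<Sum>j. ennreal (A j)) + (\<Sum>j. ennreal (B j))"
    by (rule suminf_add[symmetric]) auto
  also have "\<dots> \<le> (\<Sum>j. ennreal (A j)) + (\<Sum>j. ennreal (B' j))"
  proof (rule add_left_mono)
    have "(\<Sum>j. ennreal (B j)) = (\<Sum>j\<le>n. ennreal (B j))"
      by (rule suminf_finite) (auto simp: B_def)
    also have "\<dots> = ennreal (\<Sum>j\<le>n. B j)" using B0 by simp
    also have "\<dots> \<le> ennreal (\<Sum>j\<le>n. B' j)"
      using finite_S[OF z, where n=n and b=b] by (intro ennreal_leI) (simp add: B_def B'_def)
    also have "\<dots> = (\<Sum>j\<le>n. ennreal (B' j))" using B'0 by simp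
    also have "\<dots> = (\<Sum>j. ennreal (B' j))"
      by (rule suminf_finite[symmetric]) (auto simp: B'_def)
    finally show "(\<Sum>j. ennreal (B j)) \<le> (\<Sum>j. ennreal (B' j))" .
  qed
  also have "\<dots> = (\<Sum>j. ennreal (A j) + ennreal (B' j))"
    by (rule suminf_add) auto
  also have "\<dots> = (\<Sum>j. ennreal (cw n j * (cmod (b j))\<^sup>2))"
  proof (intro suminf_cong)
    fix j
    have "A j + B' j = cw n j * (cmod (b j))\<^sup>2" unfolding A_def B'_def cw_def by (auto simp: algebra_simps)
    then show "ennreal (A j) + ennreal (B' j) = ennreal (cw n j * (cmod (b j))\<^sup>2)"
      using A0 B'0 by (simp add: ennreal_plus[symmetric] del: ennreal_plus)
  qed
  finally show ?thesis .
qed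



lemma cw_nonneg: "0 \<le> cw n j" unfolding cw_def by auto

lemma cw_le4: "cw n j \<le> 4"
proof (cases "j \<le> n")
  case True
  have a: "real j / real (n + 1) \<le> 1" using True by (simp add: field_simps)
  have b: "2 * (real j + 1) / real (n + 1) \<le> 2" using True by (simp add: field_simps)
  have "(real j / real (n + 1))\<^sup>2 \<le> 1" using a by (simp add: power_le_one)
  then have c: "2 * (real j / real (n + 1))\<^sup>2 \<le> 2" by simp
  show ?thesis using b c unfolding cw_def if_P[OF True] by linarith
qed (simp add: cw_def)

lemma cw_lim: "(\<lambda>n. cw n j) \<longlonglongrightarrow> 0"
proof -
  have I: "(\<lambda>n. inverse (real (Suc n))) \<longlonglongrightarrow> 0" by (rule LIMSEQ_inverse_real_of_nat)
  have "(\<lambda>n. 2 * (real j * inverse (real (Suc n)))\<^sup>2 + 2 * (real j + 1) * inverse (real (Suc n)))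
        \<longlonglongrightarrow> 2 * (real j * 0)\<^sup>2 + 2 * (real j + 1) * 0"
    by (intro tendsto_intros I)
  then have L: "(\<lambda>n. 2 * (real j * inverse (real (Suc n)))\<^sup>2 + 2 * (real j + 1) * inverse (real (Suc n))) \<longlonglongrightarrow> 0"
    by simp
  have "eventually (\<lambda>n. 2 * (real j * inverse (real (Suc n)))\<^sup>2 + 2 * (real j + 1) * inverse (real (Suc n)) = cw n j) sequentially"
    using eventually_ge_at_top[of j] by eventually_elim (simp add: cw_def divide_inverse)
  with L show ?thesis by (rule Lim_transform_eventually)
qed

lemma F_le: "(\<Sum>j. ennreal (cw n j * (cmod (b j))\<^sup>2)) \<le> 4 * (\<Sum>j. ennreal ((cmod (b j))\<^sup>2))"
proof -
  have "(\<Sum>j. ennreal (cw n j * (cmod (b j))\<^sup>2)) \<le> (\<Sum>j. 4 * ennreal ((cmod (b j))\<^sup>2))"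
  proof (intro suminf_le summableI)
    fix j
    have "cw n j * (cmod (b j))\<^sup>2 \<le> 4 * (cmod (b j))\<^sup>2" using cw_le4 by (intro mult_right_mono) auto
    then have "ennreal (cw n j * (cmod (b j))\<^sup>2) \<le> ennreal (4 * (cmod (b j))\<^sup>2)" by (rule ennreal_leI)
    then show "ennreal (cw n j * (cmod (b j))\<^sup>2) \<le> 4 * ennreal ((cmod (b j))\<^sup>2)"
      by (simp add: ennreal_mult)
  qed
  also have "(\<Sum>j. 4 * ennreal ((cmod (b j))\<^sup>2)) = 4 * (\<Sum>j. ennreal ((cmod (b j))\<^sup>2))"
    by (rule ennreal_suminf_cmult)
  finally show ?thesis .
qed

lemma F_lim:
  assumes "(\<Sum>j. ennreal ((cmod (b j))\<^sup>2)) < \<infinity>"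
  shows "(\<lambda>n. \<Sum>j. ennreal (cw n j * (cmod (b j))\<^sup>2)) \<longlonglongrightarrow> 0"
proof -
  define u where "u n j = ennreal (cw n j * (cmod (b j))\<^sup>2)" for n j
  define w where "w j = 4 * ennreal ((cmod (b j))\<^sup>2)" for j
  have bnd: "u n j \<le> w j" for n j
  proof -
    have "cw n j * (cmod (b j))\<^sup>2 \<le> 4 * (cmod (b j))\<^sup>2" using cw_le4 by (intro mult_right_mono) auto
    then have "ennreal (cw n j * (cmod (b j))\<^sup>2) \<le> ennreal (4 * (cmod (b j))\<^sup>2)" by (rule ennreal_leI)
    then show ?thesis unfolding u_def w_def by (simp add: ennreal_mult)
  qed
  have "(\<integral>\<^sup>+j. w j \<partial>count_space UNIV) = (\<Sum>j. w j)" by (rule nn_integral_count_space_nat)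
  also have "\<dots> = 4 * (\<Sum>j. ennreal ((cmod (b j))\<^sup>2))" by (simp add: w_def)
  finally have eqw: "(\<integral>\<^sup>+j. w j \<partial>count_space UNIV) = 4 * (\<Sum>j. ennreal ((cmod (b j))\<^sup>2))" .
  have "4 * (\<Sum>j. ennreal ((cmod (b j))\<^sup>2)) < top"
    using assms unfolding infinity_ennreal_def by (simp add: ennreal_mult_less_top)
  then have wfin: "(\<integral>\<^sup>+j. w j \<partial>count_space UNIV) < \<infinity>"
    unfolding eqw infinity_ennreal_def .
  have ls: "limsup (\<lambda>n. \<integral>\<^sup>+j. u n j \<partial>count_space UNIV) \<le> (\<integral>\<^sup>+ j. limsup (\<lambda>n. u n j) \<partial>count_space UNIV)"
    by (rule nn_integral_limsup[where w=w]) (use wfin in \<open>auto simp: bnd borel_measurable_count_space infinity_ennreal_def\<close>)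
  have "limsup (\<lambda>n. u n j) = 0" for j
  proof -
    have "(\<lambda>n. cw n j * (cmod (b j))\<^sup>2) \<longlonglongrightarrow> 0 * (cmod (b j))\<^sup>2"
      by (intro tendsto_mult cw_lim tendsto_const)
    then have "(\<lambda>n. u n j) \<longlonglongrightarrow> ennreal 0"
      unfolding u_def by (intro tendsto_ennrealI) simp
    then have "(\<lambda>n. u n j) \<longlonglongrightarrow> 0" by simp
    then show ?thesis by (simp add: lim_imp_Limsup)
  qed
  with ls have "limsup (\<lambda>n. \<integral>\<^sup>+j. u n j \<partial>count_space UNIV) \<le> 0" by simp
  then have "(\<lambda>n. \<integral>\<^sup>+j. u n j \<partial>count_space UNIV) \<longlonglongrightarrow> 0"
    by (metis Liminf_le_Limsup bot.extremum_unique tendsto_iff_Liminf_eq_Limsup trivial_limit_sequentially zero_ennreal_def le_zero_eq)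
  then show ?thesis by (simp add: u_def nn_integral_count_space_nat)
qed



lemma le_cmult_INF:
  fixes c x :: ennreal
  assumes "c \<noteq> 0" "c \<noteq> top" and le: "\<And>g. g \<in> A \<Longrightarrow> x \<le> c * h g"
  shows "x \<le> c * (INF g\<in>A. h g)"
proof -
  have "x / c \<le> (INF g\<in>A. h g)"
  proof (rule INF_greatest)
    fix g assume "g \<in> A"
    then have "x / c \<le> (c * h g) / c" using le by (intro divide_right_mono_ennreal) auto
    also have "\<dots> = h g" using assms(1,2) by (simp add: mult.commute[of c] ennreal_mult_divide_eq)
    finally show "x / c \<le> h g" .
  qed
  then have "c * (x / c) \<le> c * (INF g\<in>A. h g)" by (rule mult_left_mono) simp
  also have "c * (x / c) = x" using assms(1,2)
    by (simp add: ennreal_times_divide mult.commute[of c] ennreal_mult_divide_eq)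
  finally show ?thesis .
qed

lemma pointwise:
  fixes f g :: "complex \<Rightarrow> complex"
  assumes f: "f holomorphic_on ball 0 1" and gH: "g \<in> H2"
    and eq: "\<forall>z\<in>ball 0 1. f z = a + (z - \<zeta>) * g z" and z: "cmod \<zeta> \<le> 1"
  shows "local_dirichlet \<zeta> (\<lambda>z. fejer_mean n f z - f z)
           \<le> (\<Sum>j. ennreal (cw n j * (cmod (taylor_coeff g j))\<^sup>2))"
proof -
  define b where "b = taylor_coeff g"
  have g: "g holomorphic_on ball 0 1" and gfin: "hardy_norm2 g < \<infinity>" using gH by (auto simp: H2_def)
  have A: "taylor_coeff f k = (if k = 0 then a else b (k - 1)) - \<zeta> * b k" for k
    unfolding b_def by (rule coeff_relation[OF f g eq])
  define P where "P z = (\<Sum>j\<le>n. pcf b \<zeta> n j * z ^ j)" for z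
  define g' where "g' z = P z - g z" for z
  have Ph: "P holomorphic_on ball 0 1" unfolding P_def by (auto intro!: holomorphic_intros)
  have g'h: "g' holomorphic_on ball 0 1" unfolding g'_def using Ph g by (auto intro!: holomorphic_intros)
  have tc: "taylor_coeff g' j = (if j \<le> n then pcf b \<zeta> n j else 0) - b j" for j
  proof -
    have "(deriv ^^ j) g' 0 = (deriv ^^ j) P 0 - (deriv ^^ j) g 0"
      unfolding g'_def by (rule higher_deriv_diff[OF Ph g]) auto
    then have "taylor_coeff g' j = taylor_coeff P j - taylor_coeff g j"
      unfolding taylor_coeff_def by (simp add: diff_divide_distrib)
    also have "taylor_coeff P j = (if j \<le> n then pcf b \<zeta> n j else 0)"
      unfolding P_def taylor_poly ..
    finally show ?thesis unfolding b_def .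
  qed
  have "hardy_norm2 g' = (\<Sum>j. ennreal ((cmod ((if j \<le> n then pcf b \<zeta> n j else 0) - b j))\<^sup>2))"
    unfolding hardy_norm2_def tc ..
  also have "\<dots> \<le> (\<Sum>j. ennreal (cw n j * (cmod (b j))\<^sup>2))" by (rule hardy_bound[OF z])
  finally have hg': "hardy_norm2 g' \<le> (\<Sum>j. ennreal (cw n j * (cmod (b j))\<^sup>2))" .
  also have "\<dots> \<le> 4 * (\<Sum>j. ennreal ((cmod (b j))\<^sup>2))" by (rule F_le)
  also have "\<dots> = 4 * hardy_norm2 g" unfolding hardy_norm2_def b_def ..
  finally have "hardy_norm2 g' \<le> 4 * hardy_norm2 g" .
  then have "hardy_norm2 g' < \<infinity>"
    using gfin by (metis ennreal_mult_less_top ennreal_numeral_less_top infinity_ennreal_def order.strict_trans1)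
  then have g'H: "g' \<in> H2" using g'h by (simp add: H2_def)
  have rep: "\<forall>z\<in>ball 0 1. fejer_mean n f z - f z = (taylor_coeff f 0 + \<zeta> * pcf b \<zeta> n 0 - a) + (z - \<zeta>) * g' z"
  proof
    fix z :: complex assume zb: "z \<in> ball 0 1"
    have fe: "fejer_mean n f z = (taylor_coeff f 0 + \<zeta> * pcf b \<zeta> n 0) + (z - \<zeta>) * P z"
      unfolding fejer_mean_def P_def by (rule poly_identity[OF A])
    show "fejer_mean n f z - f z = (taylor_coeff f 0 + \<zeta> * pcf b \<zeta> n 0 - a) + (z - \<zeta>) * g' z"
    proof -
      have fz: "f z = a + (z - \<zeta>) * g z" using eq zb by blast
      show ?thesis unfolding g'_def fz fe by (simp add: algebra_simps)
    qed
  qed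
  have "local_dirichlet \<zeta> (\<lambda>z. fejer_mean n f z - f z) \<le> hardy_norm2 g'"
    unfolding local_dirichlet_def using g'H rep by (intro INF_lower) auto
  with hg' show ?thesis unfolding b_def by (meson order_trans)
qed



theorem mainTheorem2:
  fixes \<mu> :: "complex measure" and f :: "complex \<Rightarrow> complex"
  assumes "finite_measure \<mu>"
    and "sets \<mu> = sets (restrict_space borel (cball 0 1))"
    and "f holomorphic_on ball 0 1"
    and "dirichlet_mu \<mu> f < \<infinity>"
  shows "(\<lambda>n. Dmu_norm2 \<mu> (\<lambda>z. fejer_mean n f z - f z)) \<longlonglongrightarrow> 0"
proof -
  have sp: "space \<mu> = cball 0 1"
    using sets_eq_imp_space_eq[OF assms(2)] by (simp add: space_restrict_space)
  have f0: "fejer_mean n f 0 = f 0" for n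
  proof -
    have "fejer_mean n f 0 = (\<Sum>k\<le>n. if k = 0 then f 0 else 0)"
      unfolding fejer_mean_def by (intro sum.cong refl) (auto simp: taylor_coeff_def)
    then show ?thesis by simp
  qed
  define \<phi> where "\<phi> \<zeta> = 4 * local_dirichlet \<zeta> f" for \<zeta>
  define \<psi> where "\<psi> n \<zeta> = local_dirichlet \<zeta> (\<lambda>z. fejer_mean n f z - f z)" for n \<zeta>
  have "(\<integral>\<^sup>+\<zeta>. \<phi> \<zeta> \<partial>\<mu>) \<le> 4 * (\<integral>\<^sup>+\<zeta>. local_dirichlet \<zeta> f \<partial>\<mu>)"
    unfolding \<phi>_def by (rule lower_nn_integral_cmult_le) simp
  also have "\<dots> < \<infinity>" using assms(4) unfolding dirichlet_mu_def
    by (metis ennreal_mult_less_top ennreal_numeral_less_top infinity_ennreal_def)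
  finally have fin: "(\<integral>\<^sup>+\<zeta>. \<phi> \<zeta> \<partial>\<mu>) < \<infinity>" .
  have le: "\<psi> n \<zeta> \<le> \<phi> \<zeta>" if "\<zeta> \<in> space \<mu>" for n \<zeta>
  proof -
    have z: "cmod \<zeta> \<le> 1" using that sp by auto
    show ?thesis unfolding \<psi>_def \<phi>_def local_dirichlet_def[of \<zeta> f]
    proof (rule le_cmult_INF)
      fix g assume "g \<in> {g \<in> H2. \<exists>a. \<forall>z\<in>ball 0 1. f z = a + (z - \<zeta>) * g z}"
      then obtain a where gH: "g \<in> H2" and eq: "\<forall>z\<in>ball 0 1. f z = a + (z - \<zeta>) * g z" by auto
      have "local_dirichlet \<zeta> (\<lambda>z. fejer_mean n f z - f z) \<le> (\<Sum>j. ennreal (cw n j * (cmod (taylor_coeff g j))\<^sup>2))"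
        by (rule pointwise[OF assms(3) gH eq z])
      also have "\<dots> \<le> 4 * hardy_norm2 g" unfolding hardy_norm2_def by (rule F_le)
      finally show "local_dirichlet \<zeta> (\<lambda>z. fejer_mean n f z - f z) \<le> 4 * hardy_norm2 g" .
    qed auto
  qed
  have lim: "(\<lambda>n. \<psi> n \<zeta>) \<longlonglongrightarrow> 0" if "\<zeta> \<in> space \<mu>" "\<phi> \<zeta> < \<infinity>" for \<zeta>
  proof -
    have z: "cmod \<zeta> \<le> 1" using that sp by auto
    have "local_dirichlet \<zeta> f \<noteq> top" using that(2) unfolding \<phi>_def infinity_ennreal_def by auto
    then have "{g \<in> H2. \<exists>a. \<forall>z\<in>ball 0 1. f z = a + (z - \<zeta>) * g z} \<noteq> {}"
      unfolding local_dirichlet_def by auto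
    then obtain g a where gH: "g \<in> H2" and eq: "\<forall>z\<in>ball 0 1. f z = a + (z - \<zeta>) * g z" by auto
    have gfin: "(\<Sum>j. ennreal ((cmod (taylor_coeff g j))\<^sup>2)) < \<infinity>"
      using gH by (simp add: H2_def hardy_norm2_def)
    show ?thesis
    proof (rule tendsto_sandwich[OF _ _ tendsto_const F_lim[OF gfin]])
      show "\<forall>\<^sub>F n in sequentially. 0 \<le> \<psi> n \<zeta>" by simp
      show "\<forall>\<^sub>F n in sequentially. \<psi> n \<zeta> \<le> (\<Sum>j. ennreal (cw n j * (cmod (taylor_coeff g j))\<^sup>2))"
        unfolding \<psi>_def using pointwise[OF assms(3) gH eq z] by (intro always_eventually) auto
    qed
  qed
  have "(\<lambda>n. \<integral>\<^sup>+\<zeta>. \<psi> n \<zeta> \<partial>\<mu>) \<longlonglongrightarrow> 0"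
    by (rule lower_dct[OF fin le lim])
  moreover have "Dmu_norm2 \<mu> (\<lambda>z. fejer_mean n f z - f z) = (\<integral>\<^sup>+\<zeta>. \<psi> n \<zeta> \<partial>\<mu>)" for n
    unfolding Dmu_norm2_def dirichlet_mu_def \<psi>_def using f0[of n] by simp
  ultimately show ?thesis by simp
qed


end
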